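(* There exist a Banach algebra $A$ which is not nilpotent and a Banach $A$-bimodule $X$ such that $Mul_{2}(A,X)\subsetneq Mul_{3}(A,X)$.
   Context: A Banach algebra $A$ is nilpotent if there is $n\ge 2$ with $a_1a_2\cdots a_n=0$ for all $a_1,\dots,a_n\in A$. For $n\ge 2$, a bounded linear map $T:A\to X$ into a Banach $A$-bimodule is an $n$-multiplier if $T(a_1\cdots a_n)=a_1\cdot T(a_2\cdots a_n)=T(a_1\cdots a_{n-1})\cdot a_n$ for all $a_i\in A$; $Mul_n(A,X)$ is the set of all $n$-multipliers. *)

theory Defs
  imports "HOL-Analysis.Analysis"
begin

text \<open>Complex Banach spaces: the underlying type carries the (real) Banach space
  structure (norm, completeness); sm is a complex scalar multiplication extending
  the real one and compatible with the norm.\<close>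
definition complex_banach_space :: "(complex \<Rightarrow> 'a::{real_normed_vector,banach} \<Rightarrow> 'a) \<Rightarrow> bool" where
  "complex_banach_space sm \<longleftrightarrow>
     (\<forall>c x y. sm c (x + y) = sm c x + sm c y) \<and>
     (\<forall>c d x. sm (c + d) x = sm c x + sm d x) \<and>
     (\<forall>c d x. sm (c * d) x = sm c (sm d x)) \<and>
     (\<forall>r x. sm (complex_of_real r) x = r *\<^sub>R x) \<and>
     (\<forall>c x. norm (sm c x) = cmod c * norm x)"

definition cbounded_linear ::
  "(complex \<Rightarrow> 'a::real_normed_vector \<Rightarrow> 'a) \<Rightarrow> (complex \<Rightarrow> 'b::real_normed_vector \<Rightarrow> 'b) \<Rightarrow> ('a \<Rightarrow> 'b) \<Rightarrow> bool" where
  "cbounded_linear smA smB f \<longleftrightarrow> bounded_linear f \<and> (\<forall>c x. f (smA c x) = smB c (f x))"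

definition banach_algebra ::
  "(complex \<Rightarrow> 'a::{real_normed_vector,banach} \<Rightarrow> 'a) \<Rightarrow> ('a \<Rightarrow> 'a \<Rightarrow> 'a) \<Rightarrow> bool" where
  "banach_algebra smA mul \<longleftrightarrow>
     complex_banach_space smA \<and> bounded_bilinear mul \<and>
     (\<forall>c a b. mul (smA c a) b = smA c (mul a b) \<and> mul a (smA c b) = smA c (mul a b)) \<and>
     (\<forall>a b c. mul (mul a b) c = mul a (mul b c)) \<and>
     (\<forall>a b. norm (mul a b) \<le> norm a * norm b)"

definition banach_bimodule ::
  "(complex \<Rightarrow> 'a::{real_normed_vector,banach} \<Rightarrow> 'a) \<Rightarrow> ('a \<Rightarrow> 'a \<Rightarrow> 'a) \<Rightarrow>
   (complex \<Rightarrow> 'x::{real_normed_vector,banach} \<Rightarrow> 'x) \<Rightarrow> ('a \<Rightarrow> 'x \<Rightarrow> 'x) \<Rightarrow> ('x \<Rightarrow> 'a \<Rightarrow> 'x) \<Rightarrow> bool" where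
  "banach_bimodule smA mul smX lft rgt \<longleftrightarrow>
     complex_banach_space smX \<and> bounded_bilinear lft \<and> bounded_bilinear rgt \<and>
     (\<forall>c a x. lft (smA c a) x = smX c (lft a x) \<and> lft a (smX c x) = smX c (lft a x)) \<and>
     (\<forall>c a x. rgt (smX c x) a = smX c (rgt x a) \<and> rgt x (smA c a) = smX c (rgt x a)) \<and>
     (\<forall>a b x. lft (mul a b) x = lft a (lft b x)) \<and>
     (\<forall>a b x. rgt x (mul a b) = rgt (rgt x a) b) \<and>
     (\<forall>a b x. lft a (rgt x b) = rgt (lft a x) b)"

fun mprod :: "('a \<Rightarrow> 'a \<Rightarrow> 'a) \<Rightarrow> 'a \<Rightarrow> 'a list \<Rightarrow> 'a" where
  "mprod m x [] = x"
| "mprod m x (y # ys) = m x (mprod m y ys)"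

definition nilpotent_alg :: "('a::zero \<Rightarrow> 'a \<Rightarrow> 'a) \<Rightarrow> bool" where
  "nilpotent_alg mul \<longleftrightarrow> (\<exists>n\<ge>2. \<forall>a as. length as = n - 1 \<longrightarrow> mprod mul a as = 0)"

text \<open>n-multipliers: T(a1...an) = a1.T(a2...an) = T(a1...a(n-1)).an,
  with a1 = a, (a2,...,a(n-1)) = bs, an = c.\<close>
definition Mul ::
  "(complex \<Rightarrow> 'a::real_normed_vector \<Rightarrow> 'a) \<Rightarrow> ('a \<Rightarrow> 'a \<Rightarrow> 'a) \<Rightarrow>
   (complex \<Rightarrow> 'x::real_normed_vector \<Rightarrow> 'x) \<Rightarrow> ('a \<Rightarrow> 'x \<Rightarrow> 'x) \<Rightarrow> ('x \<Rightarrow> 'a \<Rightarrow> 'x) \<Rightarrow>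
   nat \<Rightarrow> ('a \<Rightarrow> 'x) set" where
  "Mul smA mul smX lft rgt n = {T. cbounded_linear smA smX T \<and>
     (\<forall>a bs c. length bs = n - 2 \<longrightarrow>
        T (mprod mul a (bs @ [c])) = lft a (T (mprod mul (hd (bs @ [c])) (tl (bs @ [c])))) \<and>
        T (mprod mul a (bs @ [c])) = rgt (T (mprod mul a bs)) c)}"

end

theory Submission
  imports Defs
begin

definition smA0 :: "complex \<Rightarrow> complex^4 \<Rightarrow> complex^4" where
  "smA0 c x = (\<chi> i. c * x$i)"

definition mul0 :: "complex^4 \<Rightarrow> complex^4 \<Rightarrow> complex^4" where
  "mul0 a b = (\<chi> i. if i = 1 then a$1 * b$1 else if i = 3 then a$2 * b$2 else 0)"

lemma norm4: "norm (x::complex^4) = sqrt (cmod (x$1)^2 + cmod (x$2)^2 + cmod (x$3)^2 + cmod (x$4)^2)"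
  by (simp add: norm_vec_def L2_set_def sum_4)

lemma one_ne: "(1::4) \<noteq> 3" "(3::4) \<noteq> 1" by simp_all

lemma mul0_nth: "mul0 a b $ 1 = a$1 * b$1" "mul0 a b $ 3 = a$2*b$2"
  "mul0 a b $ 2 = 0" "mul0 a b $ 4 = 0"
  by (simp_all add: mul0_def)

lemma smA0_nth: "smA0 c x $ i = c * x$i" by (simp add: smA0_def)

lemma mul0_norm: "norm (mul0 a b) \<le> norm a * norm b"
proof -
  define p where "p = cmod (a$1)" define q where "q = cmod (a$2)"
  define r where "r = cmod (a$3)" define s where "s = cmod (a$4)"
  define p' where "p' = cmod (b$1)" define q' where "q' = cmod (b$2)"
  define r' where "r' = cmod (b$3)" define s' where "s' = cmod (b$4)"
  have "norm (mul0 a b) = sqrt ((p*p')^2 + (q*q')^2)"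
    by (simp add: norm4 mul0_nth norm_mult p_def q_def p'_def q'_def)
  also have "\<dots> \<le> sqrt ((p^2+q^2+r^2+s^2) * (p'^2+q'^2+r'^2+s'^2))"
    apply (rule real_sqrt_le_mono)
    by (simp add: power_mult_distrib algebra_simps add_nonneg_nonneg)
  also have "\<dots> = norm a * norm b"
    by (simp add: norm4 real_sqrt_mult p_def q_def r_def s_def p'_def q'_def r'_def s'_def)
  finally show ?thesis .
qed

lemma vec4_eq: "(x::complex^4) = y \<longleftrightarrow> x$1 = y$1 \<and> x$2 = y$2 \<and> x$3 = y$3 \<and> x$4 = y$4"
  unfolding vec_eq_iff forall_4 ..

lemma cbs_A: "complex_banach_space smA0"
  unfolding complex_banach_space_def
proof (intro conjI allI)
  fix r :: real and x :: "complex^4"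
  show "smA0 (complex_of_real r) x = r *\<^sub>R x"
    by (simp add: vec_eq_iff smA0_nth) (simp add: scaleR_conv_of_real)
next
  fix c :: complex and x :: "complex^4"
  have "norm (smA0 c x) = sqrt ((cmod c)^2 * ((cmod (x$1))^2 + (cmod (x$2))^2 + (cmod (x$3))^2 + (cmod (x$4))^2))"
    by (simp add: norm4 smA0_nth norm_mult power_mult_distrib algebra_simps)
  also have "\<dots> = cmod c * norm x" by (simp add: real_sqrt_mult norm4)
  finally show "norm (smA0 c x) = cmod c * norm x" .
qed (auto simp: vec4_eq smA0_nth algebra_simps)

lemma cbs_X: "complex_banach_space (\<lambda>c z. c * (z::complex))"
  unfolding complex_banach_space_def
  by (auto simp: algebra_simps norm_mult scaleR_conv_of_real)

lemma bb_mul0: "bounded_bilinear mul0"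
proof
  show "\<exists>K. \<forall>a b. norm (mul0 a b) \<le> norm a * norm b * K"
    using mul0_norm by (intro exI[of _ 1]) simp
qed (auto simp: vec4_eq mul0_nth algebra_simps)

lemma bb_zero1: "bounded_bilinear (\<lambda>(a::complex^4) (x::complex). 0::complex)"
  by standard (auto intro: exI[of _ 0])
lemma bb_zero2: "bounded_bilinear (\<lambda>(x::complex) (a::complex^4). 0::complex)"
  by standard (auto intro: exI[of _ 0])

lemma ba: "banach_algebra smA0 mul0"
  unfolding banach_algebra_def
  using cbs_A bb_mul0 mul0_norm
  by (auto simp: vec4_eq mul0_nth smA0_nth algebra_simps)

lemma e_pow: "mprod mul0 (axis 1 1) (replicate k (axis 1 1)) = axis 1 1"
  by (induction k) (auto simp: vec4_eq mul0_nth axis_def)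

lemma not_nil: "\<not> nilpotent_alg mul0"
proof
  assume "nilpotent_alg mul0"
  then obtain n where "n \<ge> 2" and h: "\<forall>a as. length as = n - 1 \<longrightarrow> mprod mul0 a as = 0"
    unfolding nilpotent_alg_def by blast
  then have "mprod mul0 (axis 1 1) (replicate (n-1) (axis 1 1)) = 0" by simp
  then show False by (simp add: e_pow axis_eq_0_iff)
qed

lemma bm: "banach_bimodule smA0 mul0 (\<lambda>c z. c * z) (\<lambda>a x. 0) (\<lambda>x a. 0)"
  unfolding banach_bimodule_def using cbs_X bb_zero1 bb_zero2 by auto

lemma Mul2: "Mul smA0 mul0 (\<lambda>c z. c * z) (\<lambda>a x. 0) (\<lambda>x a. 0) 2 =
   {T. cbounded_linear smA0 (\<lambda>c z. c * z) T \<and> (\<forall>a c. T (mul0 a c) = 0)}"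
  unfolding Mul_def by auto

lemma Mul3: "Mul smA0 mul0 (\<lambda>c z. c * z) (\<lambda>a x. 0) (\<lambda>x a. 0) 3 =
   {T. cbounded_linear smA0 (\<lambda>c z. c * z) T \<and> (\<forall>a b c. T (mul0 a (mul0 b c)) = 0)}"
  unfolding Mul_def
proof (auto simp: length_Suc_conv numeral_3_eq_3)
  fix T a b c assume "\<forall>a bs. (\<exists>y. bs = [y]) \<longrightarrow> (\<forall>c. T (mprod mul0 a (bs @ [c])) = 0)"
  then have "T (mprod mul0 a ([b] @ [c])) = 0" by blast
  then show "T (mul0 a (mul0 b c)) = 0" by simp
qed

theorem theorem2p6:
  shows "\<exists>(smA :: complex \<Rightarrow> complex^4 \<Rightarrow> complex^4) (mul :: complex^4 \<Rightarrow> complex^4 \<Rightarrow> complex^4)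
           (smX :: complex \<Rightarrow> complex \<Rightarrow> complex) (lft :: complex^4 \<Rightarrow> complex \<Rightarrow> complex)
           (rgt :: complex \<Rightarrow> complex^4 \<Rightarrow> complex).
     banach_algebra smA mul \<and> \<not> nilpotent_alg mul \<and>
     banach_bimodule smA mul smX lft rgt \<and>
     Mul smA mul smX lft rgt 2 \<subset> Mul smA mul smX lft rgt 3"
proof (intro exI conjI)
  show "banach_algebra smA0 mul0" by (rule ba)
  show "\<not> nilpotent_alg mul0" by (rule not_nil)
  show "banach_bimodule smA0 mul0 (\<lambda>c z. c * z) (\<lambda>a x. 0) (\<lambda>x a. 0)" by (rule bm)
  have cb: "cbounded_linear smA0 (\<lambda>c z. c * z) (\<lambda>x. x $ 3)"
    by (auto simp: cbounded_linear_def smA0_nth)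
  have z: "\<And>a b c. mul0 a (mul0 b c) $ 3 = 0" by (simp add: mul0_nth)
  have nz: "mul0 (axis 2 1) (axis 2 1) $ 3 \<noteq> 0" by (simp add: mul0_nth axis_def)
  show "Mul smA0 mul0 (\<lambda>c z. c * z) (\<lambda>a x. 0) (\<lambda>x a. 0) 2
        \<subset> Mul smA0 mul0 (\<lambda>c z. c * z) (\<lambda>a x. 0) (\<lambda>x a. 0) 3"
    unfolding Mul2 Mul3
  proof
    show "{T. cbounded_linear smA0 (\<lambda>c z. c * z) T \<and> (\<forall>a c. T (mul0 a c) = 0)}
      \<subseteq> {T. cbounded_linear smA0 (\<lambda>c z. c * z) T \<and> (\<forall>a b c. T (mul0 a (mul0 b c)) = 0)}"
      by auto
    have "(\<lambda>x. x $ 3) \<in> {T. cbounded_linear smA0 (\<lambda>c z. c * z) T \<and> (\<forall>a b c. T (mul0 a (mul0 b c)) = 0)}"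
      using cb z by simp
    moreover have "(\<lambda>x. x $ 3) \<notin> {T. cbounded_linear smA0 (\<lambda>c z. c * z) T \<and> (\<forall>a c. T (mul0 a c) = 0)}"
      using nz by auto
    ultimately show "{T. cbounded_linear smA0 (\<lambda>c z. c * z) T \<and> (\<forall>a c. T (mul0 a c) = 0)}
      \<noteq> {T. cbounded_linear smA0 (\<lambda>c z. c * z) T \<and> (\<forall>a b c. T (mul0 a (mul0 b c)) = 0)}"
      by (metis (no_types, lifting))
  qed
qed

end
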